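(* Assume $I_\delta=0$. There exists a constant $C_{\mathcal{G}}$, independent of $\delta$ (and of $c\in[c_0,c_1]$ and $R_0\in\mathcal{R}_c$), such that for every $\delta$-admissible $S\in\mathsf{X}$ and $G=\mathcal{G}(S)$, $$\|\mathcal{A}G\|_\infty\le C_{\mathcal{G}}\,\delta,\qquad \|\mathcal{A}^2G\|_\infty\le C_{\mathcal{G}}\big(1+\|S''\|_\infty\big)\delta^2 .$$
   Context: $(\mathcal{A}F)(x)=\int_{x-1/2}^{x+1/2}F(s)\,ds$, $\Delta_1F(x)=F(x+1)-2F(x)+F(x-1)$, $a(k)=\frac{\sin(k/2)}{k/2}$, $\Psi_0'(r)=\mathrm{sgn}(r)$. Potentials: $(\Psi_\delta)_{\delta>0}$ is a family of $C^2$ functions such that $\Psi_\delta'(r)=\mathrm{sgn}(r)$ for $r\notin(-\delta,\delta)$, and $|\Psi_\delta'|\le C_\Psi$, $|\Psi_\delta''|\le C_\Psi/\delta$ on $\mathbb{R}$ with $C_\Psi$ independent of $\delta$; $I_\delta:=\frac12\int_{\mathbb{R}}(\Psi_\delta'-\Psi_0')\,dr$. Unperturbed waves (standing hypothesis, a known result): there are constants $0<c_0<1$ and $x_0,r_0,d_0,D_0>0$ such that for every $c\in[c_0,1)$ the equation $a(k)=c$ has exactly one positive solution $k_c$, and there is a two-parameter family $\mathcal{R}_c$ of functions $R_0\in W^{2,\infty}(\mathbb{R})$ solving $c^2R_0''=\Delta_1(R_0-\mathrm{sgn}(R_0))$ with $R_0(0)=0$, given by $R_0=\bar R_0+\alpha(\cos(k_c\cdot)-1)+\beta\sin(k_c\cdot)$,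 $(\alpha,\beta)$ in an open neighbourhood $U_c$ of $0\in\mathbb{R}^2$, where $\bar R_0$ is a fixed member for which $\lim_{x\to+\infty}\bar R_0(x)$ exists and $\lim_{x\to-\infty}(\bar R_0(x)-\alpha_c^-(\cos(k_cx)-1)-\beta_c^-\sin(k_cx))$ exists for some constants $\alpha_c^-,\beta_c^-$. Every $R_0\in\mathcal{R}_c$ satisfies $\|R_0\|_\infty\le D_0(1-c^2)^{-1}$, $R_0(x)>r_0$ for $x>x_0$, $R_0(x)<-r_0$ for $x<-x_0$, $R_0'(x)>d_0$ for $|x|<x_0$. Setting: $c_1\in(c_0,1)$ fixed, $c\in[c_0,c_1]$, $R_0\in\mathcal{R}_c$ fixed. $\mathsf{X}:=\{S\in W^{2,\infty}(\mathbb{R}):S(0)=0,\ \lim_{x\to+\infty}S(x)\text{ exists}\}$. $\mathcal{G}(S)(x):=\Psi_\delta'(R_0(x)+S(x))-\Psi_0'(R_0(x))$. $S\in\mathsf{X}$ is called $\delta$-admissible if there exist $x_-<0<x_+$ with: $R_0(x_\pm)+S(x_\pm)=\pm\delta$; $R_0(x)+S(x)<-\delta$ for $x<x_-$; $R_0(x)+S(x)>\delta$ for $x>x_+$; and $\frac12R_0'(0)<R_0'(x)+S'(x)<2R_0'(0)$ for $x_-<x<x_+$. *)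

theory Defs
  imports "HOL-Analysis.Analysis"
begin

definition Aop :: "(real \<Rightarrow> real) \<Rightarrow> real \<Rightarrow> real" where
  "Aop F x = integral {x - 1/2 .. x + 1/2} F"

definition Delta1 :: "(real \<Rightarrow> real) \<Rightarrow> real \<Rightarrow> real" where
  "Delta1 F x = F (x + 1) - 2 * F x + F (x - 1)"

definition afun :: "real \<Rightarrow> real" where
  "afun k = sin (k / 2) / (k / 2)"

text \<open>Sup norm (used only for bounded functions).\<close>
definition supnorm :: "(real \<Rightarrow> real) \<Rightarrow> real" where
  "supnorm f = (SUP x. \<bar>f x\<bar>)"

text \<open>W^{2,\<infinity>}(R): f, f' bounded, f differentiable everywhere, f' Lipschitz
  (i.e. f'' \<in> L^\<infinity>).\<close>
definition W2inf :: "(real \<Rightarrow> real) \<Rightarrow> bool" where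
  "W2inf f \<longleftrightarrow> bounded (range f) \<and> (\<forall>x. f differentiable (at x)) \<and>
     bounded (range (deriv f)) \<and> (\<exists>L. L-lipschitz_on UNIV (deriv f))"

text \<open>\<parallel>f''\<parallel>_\<infinity> for f \<in> W^{2,\<infinity>}: the best Lipschitz constant of f'.\<close>
definition d2norm :: "(real \<Rightarrow> real) \<Rightarrow> real" where
  "d2norm f = Inf {L. L-lipschitz_on UNIV (deriv f)}"

definition Xspace :: "(real \<Rightarrow> real) set" where
  "Xspace = {S. W2inf S \<and> S 0 = 0 \<and> (\<exists>l. (S \<longlongrightarrow> l) at_top)}"

definition admissible :: "real \<Rightarrow> (real \<Rightarrow> real) \<Rightarrow> (real \<Rightarrow> real) \<Rightarrow> bool" where
  "admissible \<delta> R0 S \<longleftrightarrow> (\<exists>xm xp. xm < 0 \<and> 0 < xp \<and>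
     R0 xp + S xp = \<delta> \<and> R0 xm + S xm = - \<delta> \<and>
     (\<forall>x<xm. R0 x + S x < - \<delta>) \<and> (\<forall>x>xp. R0 x + S x > \<delta>) \<and>
     (\<forall>x. xm < x \<and> x < xp \<longrightarrow>
        deriv R0 0 / 2 < deriv R0 x + deriv S x \<and> deriv R0 x + deriv S x < 2 * deriv R0 0))"

text \<open>Weak (integrated) form of c^2 R0'' = Delta1(R0 - sgn R0).\<close>
definition solves_wave :: "real \<Rightarrow> (real \<Rightarrow> real) \<Rightarrow> bool" where
  "solves_wave c R0 \<longleftrightarrow> (\<forall>x y. x \<le> y \<longrightarrow>
     c\<^sup>2 * (deriv R0 y - deriv R0 x) = integral {x..y} (Delta1 (\<lambda>s. R0 s - sgn (R0 s))))"

definition Rfam :: "(real \<Rightarrow> real) \<Rightarrow> real \<Rightarrow> (real \<times> real) set \<Rightarrow> (real \<Rightarrow> real) set" where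
  "Rfam Rbar k U = {(\<lambda>x. Rbar x + \<alpha> * (cos (k * x) - 1) + \<beta> * sin (k * x)) | \<alpha> \<beta>. (\<alpha>, \<beta>) \<in> U}"

end

theory Submission
  imports Defs
begin


lemma abs_integral_le:
  fixes f g :: "real \<Rightarrow> real"
  assumes "\<And>x. x \<in> S \<Longrightarrow> \<bar>f x\<bar> \<le> g x" "g integrable_on S"
  shows "\<bar>integral S f\<bar> \<le> integral S g"
proof (cases "f integrable_on S")
  case True
  then show ?thesis using integral_norm_bound_integral[OF True assms(2)] assms(1) by simp
next
  case False
  then have "integral S f = 0" by (rule not_integrable_integral)
  moreover have "0 \<le> integral S g"
    using assms by (intro integral_nonneg) (auto intro: order_trans[OF abs_ge_zero])
  ultimately show ?thesis by simp
qed

lemma ind_int: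
  fixes a b u v M :: real
  assumes "u \<le> v" "0 \<le> M"
  shows "(\<lambda>y. if y \<in> {u..v} then M else 0) integrable_on {a..b}"
    and "integral {a..b} (\<lambda>y. if y \<in> {u..v} then M else 0) \<le> M * (v - u)"
proof -
  have e: "{u..v} \<inter> {a..b} = {max a u .. min b v}" by auto
  show "(\<lambda>y. if y \<in> {u..v} then M else 0) integrable_on {a..b}"
    unfolding integrable_restrict_Int e by auto
  have "integral {a..b} (\<lambda>y. if y \<in> {u..v} then M else 0) = integral {max a u .. min b v} (\<lambda>y. M)"
    unfolding integral_restrict_Int e by simp
  also have "\<dots> \<le> (v - u) * M"
    using assms by (cases "max a u \<le> min b v") (auto intro!: mult_right_mono)
  finally show "integral {a..b} (\<lambda>y. if y \<in> {u..v} then M else 0) \<le> M * (v - u)" by (simp add: mult.commute)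
qed

lemma abs_deriv:
  fixes x :: real
  assumes "x \<noteq> 0"
  shows "(abs has_real_derivative sgn x) (at x)"
proof (cases "x > 0")
  case True
  have "((\<lambda>y. y) has_real_derivative 1) (at x)" by (rule DERIV_ident)
  then have "(abs has_real_derivative 1) (at x)"
    by (rule has_field_derivative_transform_within_open[where S="{0<..}"]) (use True in auto)
  then show ?thesis using True by simp
next
  case False
  then have x: "x < 0" using assms by simp
  have "((\<lambda>y. - y) has_real_derivative - 1) (at x)" by (rule derivative_intros DERIV_ident)+
  then have "(abs has_real_derivative - 1) (at x)"
    by (rule has_field_derivative_transform_within_open[where S="{..<0}"]) (use x in auto)
  then show ?thesis using x by simp
qed

lemma sgn_integrable: "(sgn :: real \<Rightarrow> real) integrable_on {a..b}"
proof (cases "a \<le> b")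
  case True
  have "(sgn has_integral (\<bar>b\<bar> - \<bar>a\<bar>)) {a..b}"
  proof (rule fundamental_theorem_of_calculus_interior_strong[where S="{0}"])
    show "continuous_on {a..b} abs" by (intro continuous_intros)
    fix x :: real assume "x \<in> {a<..<b} - {0}"
    then have "x \<noteq> 0" by auto
    then show "(abs has_vector_derivative sgn x) (at x)"
      using abs_deriv[of x] by (auto simp: has_real_derivative_iff_has_vector_derivative)
  qed (use True in auto)
  then show ?thesis by blast
next
  case False
  then have "{a..b} = {}" by auto
  then show ?thesis using has_integral_empty[of sgn] by (auto simp: integrable_on_def)
qed

lemma sign_lemma:
  fixes f f' :: "real \<Rightarrow> real"
  assumes d: "\<And>x. (f has_real_derivative f' x) (at x)" and f0: "f 0 = 0"
    and ab: "a < 0" "0 < b" and pos: "\<And>x. a < x \<Longrightarrow> x < b \<Longrightarrow> f' x > 0"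
    and r: "\<And>x. x > b \<Longrightarrow> f x > 0" and l: "\<And>x. x < a \<Longrightarrow> f x < 0"
  shows "sgn (f y) = sgn y"
proof -
  consider "y > b" | "0 < y" "y \<le> b" | "y = 0" | "a \<le> y" "y < 0" | "y < a" by linarith
  then show ?thesis
  proof cases
    case 2
    obtain z where "0 < z" "z < y" "f y - f 0 = (y - 0) * f' z"
      using MVT2[of 0 y f f'] 2 d by auto
    moreover have "f' z > 0" using pos 2 ab \<open>0 < z\<close> \<open>z < y\<close> by auto
    ultimately have "f y > 0" using f0 2 by simp
    then show ?thesis using 2 by simp
  next
    case 4
    obtain z where "y < z" "z < 0" "f 0 - f y = (0 - y) * f' z"
      using MVT2[of y 0 f f'] 4 d by auto
    moreover have "f' z > 0" using pos 4 ab \<open>y < z\<close> \<open>z < 0\<close> by auto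
    moreover have "(0 - y) * f' z > 0" using 4 calculation by (intro mult_pos_pos) auto
    ultimately have "f y < 0" using f0 by simp
    then show ?thesis using 4 by simp
  qed (use r l f0 ab in auto)
qed

lemma d2norm_lip:
  assumes "W2inf S"
  shows "d2norm S \<ge> 0" and "\<bar>deriv S y - deriv S x\<bar> \<le> d2norm S * \<bar>y - x\<bar>"
proof -
  define A where "A = {L. L-lipschitz_on UNIV (deriv S)}"
  have ne: "A \<noteq> {}" using assms by (auto simp: W2inf_def A_def)
  have nn: "\<And>L. L \<in> A \<Longrightarrow> 0 \<le> L" by (auto simp: A_def intro: lipschitz_on_nonneg)
  show "d2norm S \<ge> 0" unfolding d2norm_def A_def[symmetric] by (rule cInf_greatest[OF ne nn])
  show "\<bar>deriv S y - deriv S x\<bar> \<le> d2norm S * \<bar>y - x\<bar>"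
  proof (cases "y = x")
    case False
    then have pos: "\<bar>y - x\<bar> > 0" by simp
    have "\<bar>deriv S y - deriv S x\<bar> / \<bar>y - x\<bar> \<le> Inf A"
    proof (rule cInf_greatest[OF ne])
      fix L assume "L \<in> A"
      then have "dist (deriv S y) (deriv S x) \<le> L * dist y x"
        by (auto simp: A_def intro: lipschitz_onD)
      then show "\<bar>deriv S y - deriv S x\<bar> / \<bar>y - x\<bar> \<le> L"
        using pos by (simp add: dist_real_def divide_le_eq)
    qed
    then show ?thesis using pos by (simp add: d2norm_def A_def divide_le_eq)
  qed simp
qed

lemma supnorm_le:
  assumes "\<And>x. \<bar>f x\<bar> \<le> B"
  shows "supnorm f \<le> B"
  unfolding supnorm_def by (rule cSUP_least) (use assms in auto)

lemma const_int_bound: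
  fixes f :: "real \<Rightarrow> real"
  assumes "x \<le> y" "\<And>s. \<bar>f s\<bar> \<le> B"
  shows "\<bar>integral {x..y} f\<bar> \<le> B * (y - x)"
proof -
  have "\<bar>integral {x..y} f\<bar> \<le> integral {x..y} (\<lambda>s. B)"
    by (rule abs_integral_le) (use assms in auto)
  then show ?thesis using assms by (simp add: mult.commute)
qed

lemma tri3: "\<bar>a\<bar> \<le> E \<Longrightarrow> \<bar>b\<bar> \<le> E \<Longrightarrow> \<bar>c\<bar> \<le> E \<Longrightarrow> \<bar>a - 2*b + c\<bar> \<le> 4*(E::real)"
  by arith

lemma tri2: "\<bar>a' - a\<bar> \<le> p \<Longrightarrow> \<bar>b' - b\<bar> \<le> q \<Longrightarrow> \<bar>(a' + b') - (a + b)\<bar> \<le> p + (q::real)"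
  by arith

lemma core:
  fixes Psi dPsi R R' :: "real \<Rightarrow> real" and \<delta> C d0 K xm xp x :: real
  assumes dP: "\<And>r. (Psi has_real_derivative dPsi r) (at r)"
    and dPc: "continuous_on UNIV dPsi"
    and out: "\<And>r. \<bar>r\<bar> \<ge> \<delta> \<Longrightarrow> dPsi r = sgn r"
    and bnd: "\<And>r. \<bar>dPsi r\<bar> \<le> C"
    and I0: "integral UNIV (\<lambda>r. dPsi r - sgn r) = 0"
    and dpos: "\<delta> > 0" and d0: "d0 > 0" and K: "K \<ge> 0"
    and dR: "\<And>x. (R has_real_derivative R' x) (at x)"
    and lipR: "\<And>x y. \<bar>R' y - R' x\<bar> \<le> K * \<bar>y - x\<bar>"
    and R0: "R 0 = 0"
    and xs: "xm < 0" "0 < xp" "R xp = \<delta>" "R xm = - \<delta>"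
    and left: "\<And>x. x < xm \<Longrightarrow> R x < - \<delta>" and right: "\<And>x. x > xp \<Longrightarrow> R x > \<delta>"
    and slope: "\<And>x. xm < x \<Longrightarrow> x < xp \<Longrightarrow> R' x > d0 / 2"
  shows "\<bar>Aop (\<lambda>y. dPsi (R y) - sgn y) x\<bar> \<le> (C + 1) * (4 * \<delta> / d0)"
    and "\<bar>Aop (Aop (\<lambda>y. dPsi (R y) - sgn y)) x\<bar>
           \<le> (16 * \<delta>\<^sup>2 / d0\<^sup>2) * (2 * (C + 1) * K / d0 + 4 * (C + 1))"
proof -
  define G where "G = (\<lambda>y. dPsi (R y) - sgn y)"
  define M where "M = C + 1"
  define L where "L = xp - xm"
  have C0: "C \<ge> 0" using bnd[of 0] by linarith
  have M0: "M \<ge> 0" using C0 by (simp add: M_def)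
  have Lpos: "L > 0" using xs by (simp add: L_def)
  have sgnR: "sgn (R y) = sgn y" for y
  proof (rule sign_lemma[OF dR R0 xs(1,2)])
    fix x assume "xm < x" "x < xp" then show "R' x > 0" using slope[of x] d0 by linarith
  next
    fix x :: real assume "x < xm" then show "R x < 0" using left[of x] dpos by linarith
  next
    fix x :: real assume "x > xp" then show "R x > 0" using right[of x] dpos by linarith
  qed
  have Rabs: "\<bar>R y\<bar> \<ge> \<delta>" if yh: "y \<le> xm \<or> y \<ge> xp" for y
  proof -
    consider "y < xm" | "y = xm" | "y = xp" | "y > xp" using yh by fastforce
    then show ?thesis
    proof cases
      case 1 then show ?thesis using left[of y] by linarith
    next
      case 4 then show ?thesis using right[of y] by linarith
    qed (use xs in auto)
  qed
  have Gz: "G y = 0" if "y \<le> xm \<or> y \<ge> xp" for y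
    using out[OF Rabs[OF that]] sgnR[of y] by (simp add: G_def)
  have Gb: "\<bar>G y\<bar> \<le> M" for y
  proof -
    have "-1 \<le> sgn y \<and> sgn y \<le> (1::real)" by (simp add: sgn_real_def)
    then show ?thesis using bnd[of "R y"] unfolding G_def M_def abs_le_iff by linarith
  qed
  have Gind: "\<bar>G y\<bar> \<le> (if y \<in> {xm..xp} then M else 0)" for y
    using Gb[of y] Gz[of y] by auto
  have Rcont: "continuous_on UNIV R"
    using dR by (meson DERIV_isCont continuous_at_imp_continuous_on)
  have Gint: "G integrable_on {a..b}" for a b
  proof -
    have "continuous_on {a..b} (\<lambda>y. dPsi (R y))"
      using continuous_on_compose2[OF dPc Rcont] by (auto intro: continuous_on_subset)
    then show ?thesis unfolding G_def
      by (intro integrable_diff integrable_continuous_interval sgn_integrable)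
  qed
  have Lb: "L \<le> 4 * \<delta> / d0"
  proof -
    obtain z where z: "xm < z" "z < xp" "R xp - R xm = (xp - xm) * R' z"
      using MVT2[of xm xp R R'] xs dR by auto
    have h: "(xp - xm) * (d0 / 2) \<le> (xp - xm) * R' z"
      using slope[OF z(1,2)] Lpos by (intro mult_left_mono) (auto simp: L_def)
    have "L * d0 = 2 * ((xp - xm) * (d0 / 2))" by (simp add: L_def)
    then have "L * d0 \<le> 4 * \<delta>" using z xs h by linarith
    then show ?thesis using d0 by (simp add: field_simps)
  qed
  have intb: "\<bar>integral {a..b} G\<bar> \<le> M * L" for a b
  proof -
    have "\<bar>integral {a..b} G\<bar> \<le> integral {a..b} (\<lambda>y. if y \<in> {xm..xp} then M else 0)"
      by (rule abs_integral_le[OF Gind ind_int(1)]) (use xs M0 in auto)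
    also have "\<dots> \<le> M * L" using ind_int(2)[of xm xp M a b] xs M0 by (simp add: L_def)
    finally show ?thesis .
  qed
  show "\<bar>Aop (\<lambda>y. dPsi (R y) - sgn y) x\<bar> \<le> (C + 1) * (4 * \<delta> / d0)"
  proof -
    have "\<bar>Aop G x\<bar> \<le> M * L" unfolding Aop_def by (rule intb)
    also have "\<dots> \<le> M * (4 * \<delta> / d0)" using Lb M0 by (rule mult_left_mono)
    finally show ?thesis by (simp add: G_def M_def)
  qed
  define \<Gamma> where "\<Gamma> = (\<lambda>r. Psi r - \<bar>r\<bar>)"
  have Psic: "continuous_on UNIV Psi"
    using dP by (meson DERIV_isCont continuous_at_imp_continuous_on)
  have \<Gamma>c: "continuous_on UNIV \<Gamma>"
    unfolding \<Gamma>_def by (intro continuous_intros Psic)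
  have \<Gamma>d: "(\<Gamma> has_real_derivative (dPsi r - sgn r)) (at r)" if "r \<noteq> 0" for r
    unfolding \<Gamma>_def by (intro DERIV_diff dP abs_deriv that)
  have "((\<lambda>r. dPsi r - sgn r) has_integral (\<Gamma> \<delta> - \<Gamma> (- \<delta>))) {-\<delta>..\<delta>}"
  proof (rule fundamental_theorem_of_calculus_interior_strong[where S="{0}"])
    show "continuous_on {-\<delta>..\<delta>} \<Gamma>" using \<Gamma>c by (rule continuous_on_subset) auto
    fix r :: real assume "r \<in> {-\<delta><..<\<delta>} - {0}"
    then show "(\<Gamma> has_vector_derivative dPsi r - sgn r) (at r)"
      using \<Gamma>d[of r] by (auto simp: has_real_derivative_iff_has_vector_derivative)
  qed (use dpos in auto)
  moreover have "integral {-\<delta>..\<delta>} (\<lambda>r. dPsi r - sgn r) = 0"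
  proof -
    have "integral UNIV (\<lambda>r. dPsi r - sgn r) = integral UNIV (\<lambda>r. if r \<in> {-\<delta>..\<delta>} then dPsi r - sgn r else 0)"
      by (rule integral_cong) (use out in auto)
    also have "\<dots> = integral {-\<delta>..\<delta>} (\<lambda>r. dPsi r - sgn r)"
      using integral_restrict_Int[where S="{-\<delta>..\<delta>}" and f="\<lambda>r. dPsi r - sgn r" and T=UNIV] by simp
    finally show ?thesis using I0 by simp
  qed
  ultimately have \<Gamma>eq: "\<Gamma> \<delta> = \<Gamma> (- \<delta>)" by (simp add: integral_unique)
  have GR: "((\<lambda>y. G y * R' y) has_integral 0) {xm..xp}"
  proof -
    have "((\<lambda>y. G y * R' y) has_integral (\<Gamma> (R xp) - \<Gamma> (R xm))) {xm..xp}"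
    proof (rule fundamental_theorem_of_calculus_interior_strong[where S="{0}"])
      show "continuous_on {xm..xp} (\<lambda>y. \<Gamma> (R y))"
        using continuous_on_compose2[OF \<Gamma>c Rcont] by (auto intro: continuous_on_subset)
      fix y :: real assume "y \<in> {xm<..<xp} - {0}"
      then have y0: "y \<noteq> 0" by auto
      then have "R y \<noteq> 0" using sgnR[of y] by (auto simp: sgn_0_0)
      then have "((\<lambda>y. \<Gamma> (R y)) has_real_derivative (dPsi (R y) - sgn (R y)) * R' y) (at y)"
        using DERIV_chain[OF \<Gamma>d dR] by (simp add: o_def)
      then show "((\<lambda>y. \<Gamma> (R y)) has_vector_derivative G y * R' y) (at y)"
        by (simp add: has_real_derivative_iff_has_vector_derivative G_def sgnR)
    qed (use xs in auto)
    then show ?thesis using \<Gamma>eq xs by simp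
  qed
  define I where "I = integral {xm..xp} G"
  have R'0: "R' 0 > d0 / 2" using slope xs by auto
  have Ib: "\<bar>I\<bar> \<le> L * (2 * M * K * L / d0)"
  proof -
    have h1: "((\<lambda>y. G y * R' y * (1 / R' 0)) has_integral 0) {xm..xp}"
      using has_integral_mult_left[OF GR, of "1 / R' 0"] by simp
    have "I = integral {xm..xp} (\<lambda>y. G y - G y * R' y * (1 / R' 0))"
      using integral_diff[OF Gint h1[THEN has_integral_integrable]] integral_unique[OF h1] integral_unique[OF GR]
      by (simp add: I_def)
    also have "\<bar>\<dots>\<bar> \<le> integral {xm..xp} (\<lambda>y. 2 * M * K * L / d0)"
    proof (rule abs_integral_le)
      fix y assume y: "y \<in> {xm..xp}"
      have "\<bar>R' 0 - R' y\<bar> \<le> K * \<bar>0 - y\<bar>" by (rule lipR)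
      also have "\<dots> \<le> K * L" using y xs K by (intro mult_left_mono) (auto simp: L_def)
      finally have a: "\<bar>R' 0 - R' y\<bar> \<le> K * L" .
      have "G y - G y * R' y * (1 / R' 0) = G y * (R' 0 - R' y) / R' 0"
        using R'0 d0 by (simp add: field_simps)
      then have "\<bar>G y - G y * R' y * (1 / R' 0)\<bar> = \<bar>G y\<bar> * \<bar>R' 0 - R' y\<bar> / R' 0"
        using R'0 d0 by (simp add: abs_mult)
      also have "\<dots> \<le> M * (K * L) / R' 0"
        using Gb[of y] a M0 R'0 d0
        by (intro divide_right_mono mult_mono) auto
      also have "\<dots> \<le> M * (K * L) / (d0 / 2)"
        using R'0 d0 M0 K Lpos by (intro divide_left_mono) auto
      also have "M * (K * L) / (d0 / 2) = 2 * M * K * L / d0" by (simp add: field_simps)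
      finally show "\<bar>G y - G y * R' y * (1 / R' 0)\<bar> \<le> 2 * M * K * L / d0" .
    qed auto
    also have "\<dots> = L * (2 * M * K * L / d0)" using xs by (simp add: L_def)
    finally show ?thesis .
  qed
  define b0 where "b0 = min (x - 1) xm"
  define H where "H = (\<lambda>u. integral {b0..u} G)"
  have AH: "Aop G t = H (t + 1/2) - H (t - 1/2)" if "t \<in> {x - 1/2..x + 1/2}" for t
  proof -
    have "integral {b0..t - 1/2} G + integral {t - 1/2..t + 1/2} G = integral {b0..t + 1/2} G"
      by (rule Henstock_Kurzweil_Integration.integral_combine) (use that Gint in \<open>auto simp: b0_def\<close>)
    then show ?thesis by (simp add: Aop_def H_def)
  qed
  have H0: "H u = 0" if "u \<le> xm" for u
  proof -
    have "H u = integral {b0..u} (\<lambda>y. 0::real)"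
      unfolding H_def by (rule integral_cong) (use that Gz in auto)
    then show ?thesis by simp
  qed
  have HI: "H u = I" if "u \<ge> xp" for u
  proof -
    have z: "integral {xp..u} G = 0"
    proof -
      have "integral {xp..u} G = integral {xp..u} (\<lambda>y. 0::real)"
        by (rule integral_cong) (use Gz in auto)
      then show ?thesis by simp
    qed
    have "integral {b0..xm} G + integral {xm..u} G = integral {b0..u} G"
      by (rule Henstock_Kurzweil_Integration.integral_combine) (use that xs Gint in \<open>auto simp: b0_def\<close>)
    moreover have "integral {xm..xp} G + integral {xp..u} G = integral {xm..u} G"
      by (rule Henstock_Kurzweil_Integration.integral_combine) (use that xs Gint in \<open>auto simp: b0_def\<close>)
    moreover have "integral {b0..xm} G = 0" using H0[of xm] by (simp add: H_def)
    ultimately show ?thesis using z by (simp add: H_def I_def)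
  qed
  have Hb: "\<bar>H u\<bar> \<le> M * L" for u unfolding H_def by (rule intb)
  define P where "P = 2 * M * L"
  define B where "B = (\<lambda>t. \<bar>I\<bar> + (if t \<in> {xm - 1/2..xp - 1/2} then P else 0)
                        + (if t \<in> {xm + 1/2..xp + 1/2} then P else 0))"
  have ML0: "0 \<le> P" using M0 Lpos by (simp add: P_def)
  have AGb: "\<bar>Aop G t\<bar> \<le> B t" if t: "t \<in> {x - 1/2..x + 1/2}" for t
  proof -
    have two: "\<bar>H (t + 1/2) - H (t - 1/2)\<bar> \<le> P"
      using Hb[of "t + 1/2"] Hb[of "t - 1/2"] unfolding P_def by linarith
    have I0': "0 \<le> \<bar>I\<bar>" by simp
    consider "t - 1/2 \<in> {xm..xp}" | "t + 1/2 \<in> {xm..xp}"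
      | "t + 1/2 < xm" | "t - 1/2 < xm" "t + 1/2 > xp" | "t - 1/2 > xp"
      by fastforce
    then show ?thesis
    proof cases
      case 1
      then have "t \<in> {xm + 1/2..xp + 1/2}" by auto
      then show ?thesis using AH[OF t] two ML0 by (auto simp: B_def)
    next
      case 2
      then have "t \<in> {xm - 1/2..xp - 1/2}" by auto
      then show ?thesis using AH[OF t] two ML0 by (auto simp: B_def)
    next
      case 3
      then show ?thesis using AH[OF t] H0[of "t + 1/2"] H0[of "t - 1/2"] ML0
        by (auto simp: B_def)
    next
      case 4
      then show ?thesis using AH[OF t] H0[of "t - 1/2"] HI[of "t + 1/2"] ML0
        by (auto simp: B_def)
    next
      case 5
      then show ?thesis using AH[OF t] HI[of "t - 1/2"] HI[of "t + 1/2"] ML0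
        by (auto simp: B_def)
    qed
  qed
  have i1: "(\<lambda>t. if t \<in> {xm - 1/2..xp - 1/2} then P else 0) integrable_on {x - 1/2..x + 1/2}"
    by (rule ind_int(1)) (use xs ML0 in auto)
  have i2: "(\<lambda>t. if t \<in> {xm + 1/2..xp + 1/2} then P else 0) integrable_on {x - 1/2..x + 1/2}"
    by (rule ind_int(1)) (use xs ML0 in auto)
  have j1: "integral {x - 1/2..x + 1/2} (\<lambda>t. if t \<in> {xm - 1/2..xp - 1/2} then P else 0) \<le> P * L"
    using ind_int(2)[of "xm - 1/2" "xp - 1/2" "P" "x - 1/2" "x + 1/2"] xs ML0 by (simp add: L_def)
  have j2: "integral {x - 1/2..x + 1/2} (\<lambda>t. if t \<in> {xm + 1/2..xp + 1/2} then P else 0) \<le> P * L"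
    using ind_int(2)[of "xm + 1/2" "xp + 1/2" "P" "x - 1/2" "x + 1/2"] xs ML0 by (simp add: L_def)
  have Bi: "B integrable_on {x - 1/2..x + 1/2}"
    unfolding B_def by (intro integrable_add i1 i2 integrable_const_ivl)
  have "integral {x - 1/2..x + 1/2} B =
      \<bar>I\<bar> + integral {x - 1/2..x + 1/2} (\<lambda>t. if t \<in> {xm - 1/2..xp - 1/2} then P else 0)
      + integral {x - 1/2..x + 1/2} (\<lambda>t. if t \<in> {xm + 1/2..xp + 1/2} then P else 0)"
    unfolding B_def
    by (subst integral_add, (intro integrable_add i1 i2 integrable_const_ivl)+,
        subst integral_add, (intro integrable_add i1 i2 integrable_const_ivl)+) simp
  also have "\<dots> \<le> L * (2 * M * K * L / d0) + 4 * M * L * L" 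
  proof -
    have "P * L + P * L = 4 * M * L * L" by (simp add: P_def)
    then show ?thesis using Ib j1 j2 by linarith
  qed
  finally have iB: "integral {x - 1/2..x + 1/2} B \<le> L * (2 * M * K * L / d0) + 4 * M * L * L" .
  have "\<bar>Aop (Aop G) x\<bar> \<le> integral {x - 1/2..x + 1/2} B"
    unfolding Aop_def[of "Aop G"] by (rule abs_integral_le[OF AGb Bi])
  also have "\<dots> \<le> L\<^sup>2 * (2 * M * K / d0 + 4 * M)"
    using iB by (simp add: power2_eq_square field_simps)
  also have "\<dots> \<le> (4 * \<delta> / d0)\<^sup>2 * (2 * M * K / d0 + 4 * M)"
    using Lb Lpos M0 K d0 by (intro mult_right_mono power_mono) auto
  also have "\<dots> = (16 * \<delta>\<^sup>2 / d0\<^sup>2) * (2 * (C + 1) * K / d0 + 4 * (C + 1))"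
    by (simp add: M_def power2_eq_square field_simps)
  finally show "\<bar>Aop (Aop (\<lambda>y. dPsi (R y) - sgn y)) x\<bar>
           \<le> (16 * \<delta>\<^sup>2 / d0\<^sup>2) * (2 * (C + 1) * K / d0 + 4 * (C + 1))" by (simp add: G_def)
qed


theorem corollary3p4:
  fixes Psi dPsi ddPsi :: "real \<Rightarrow> real \<Rightarrow> real"
    and C_Psi c0 c1 x0 r0 d0 D0 :: real
    and k :: "real \<Rightarrow> real"
    and Rbar :: "real \<Rightarrow> real \<Rightarrow> real"
    and U :: "real \<Rightarrow> (real \<times> real) set"
    and alpham betam :: "real \<Rightarrow> real"
  assumes Psi_C2: "\<And>\<delta> r. \<delta> > 0 \<Longrightarrow> (Psi \<delta> has_real_derivative dPsi \<delta> r) (at r)"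
    and dPsi_deriv: "\<And>\<delta> r. \<delta> > 0 \<Longrightarrow> (dPsi \<delta> has_real_derivative ddPsi \<delta> r) (at r)"
    and ddPsi_cont: "\<And>\<delta>. \<delta> > 0 \<Longrightarrow> continuous_on UNIV (ddPsi \<delta>)"
    and dPsi_outside: "\<And>\<delta> r. \<delta> > 0 \<Longrightarrow> \<bar>r\<bar> \<ge> \<delta> \<Longrightarrow> dPsi \<delta> r = sgn r"
    and dPsi_bound: "\<And>\<delta> r. \<delta> > 0 \<Longrightarrow> \<bar>dPsi \<delta> r\<bar> \<le> C_Psi"
    and ddPsi_bound: "\<And>\<delta> r. \<delta> > 0 \<Longrightarrow> \<bar>ddPsi \<delta> r\<bar> \<le> C_Psi / \<delta>"
    and I_zero: "\<And>\<delta>. \<delta> > 0 \<Longrightarrow> integral UNIV (\<lambda>r. dPsi \<delta> r - sgn r) / 2 = 0"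
    and c0: "0 < c0" "c0 < 1"
    and consts_pos: "x0 > 0" "r0 > 0" "d0 > 0" "D0 > 0"
    and k_sol: "\<And>c. c0 \<le> c \<Longrightarrow> c < 1 \<Longrightarrow> k c > 0 \<and> afun (k c) = c"
    and k_unique: "\<And>c \<kappa>. c0 \<le> c \<Longrightarrow> c < 1 \<Longrightarrow> \<kappa> > 0 \<Longrightarrow> afun \<kappa> = c \<Longrightarrow> \<kappa> = k c"
    and U_open: "\<And>c. c0 \<le> c \<Longrightarrow> c < 1 \<Longrightarrow> open (U c) \<and> (0, 0) \<in> U c"
    and Rbar_plus: "\<And>c. c0 \<le> c \<Longrightarrow> c < 1 \<Longrightarrow> \<exists>l. (Rbar c \<longlongrightarrow> l) at_top"
    and Rbar_minus: "\<And>c. c0 \<le> c \<Longrightarrow> c < 1 \<Longrightarrow>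
       \<exists>l. ((\<lambda>x. Rbar c x - alpham c * (cos (k c * x) - 1) - betam c * sin (k c * x)) \<longlongrightarrow> l) at_bot"
    and fam_W2: "\<And>c R0. c0 \<le> c \<Longrightarrow> c < 1 \<Longrightarrow> R0 \<in> Rfam (Rbar c) (k c) (U c) \<Longrightarrow> W2inf R0"
    and fam_zero: "\<And>c R0. c0 \<le> c \<Longrightarrow> c < 1 \<Longrightarrow> R0 \<in> Rfam (Rbar c) (k c) (U c) \<Longrightarrow> R0 0 = 0"
    and fam_ode: "\<And>c R0. c0 \<le> c \<Longrightarrow> c < 1 \<Longrightarrow> R0 \<in> Rfam (Rbar c) (k c) (U c) \<Longrightarrow> solves_wave c R0"
    and fam_bound: "\<And>c R0 x. c0 \<le> c \<Longrightarrow> c < 1 \<Longrightarrow> R0 \<in> Rfam (Rbar c) (k c) (U c) \<Longrightarrow>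
       \<bar>R0 x\<bar> \<le> D0 / (1 - c\<^sup>2)"
    and fam_pos: "\<And>c R0 x. c0 \<le> c \<Longrightarrow> c < 1 \<Longrightarrow> R0 \<in> Rfam (Rbar c) (k c) (U c) \<Longrightarrow>
       x > x0 \<Longrightarrow> R0 x > r0"
    and fam_neg: "\<And>c R0 x. c0 \<le> c \<Longrightarrow> c < 1 \<Longrightarrow> R0 \<in> Rfam (Rbar c) (k c) (U c) \<Longrightarrow>
       x < - x0 \<Longrightarrow> R0 x < - r0"
    and fam_slope: "\<And>c R0 x. c0 \<le> c \<Longrightarrow> c < 1 \<Longrightarrow> R0 \<in> Rfam (Rbar c) (k c) (U c) \<Longrightarrow>
       \<bar>x\<bar> < x0 \<Longrightarrow> deriv R0 x > d0"
    and c1: "c0 < c1" "c1 < 1"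
  shows "\<exists>C_G. \<forall>\<delta> > 0. \<forall>c \<in> {c0..c1}. \<forall>R0 \<in> Rfam (Rbar c) (k c) (U c). \<forall>S \<in> Xspace.
           admissible \<delta> R0 S \<longrightarrow>
             (let G = (\<lambda>x. dPsi \<delta> (R0 x + S x) - sgn (R0 x)) in
                supnorm (Aop G) \<le> C_G * \<delta> \<and>
                supnorm (Aop (Aop G)) \<le> C_G * (1 + d2norm S) * \<delta>\<^sup>2)"
proof -
  have CPsi0: "C_Psi \<ge> 0" using dPsi_bound[of 1 0] by linarith
  define M where "M = C_Psi + 1"
  define D where "D = D0 / (1 - c1\<^sup>2)"
  define K0 where "K0 = 4 * (D + 1) / c0\<^sup>2"
  define C2 where "C2 = (16 / d0\<^sup>2) * (2 * M * K0 / d0 + 4 * M + 2 * M / d0)"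
  have M0: "M \<ge> 0" using CPsi0 by (simp add: M_def)
  have c1sq: "1 - c1\<^sup>2 > 0" using c1 c0 by (simp add: power_less_one_iff abs_less_iff power2_less_1_iff)
  have D0': "D \<ge> 0" using consts_pos c1sq by (simp add: D_def)
  have K00: "K0 \<ge> 0" using D0' by (simp add: K0_def)
  show ?thesis
  proof (intro exI[of _ "M * 4 / d0 + C2"] allI impI ballI)
    fix \<delta> c R0 S
    assume dpos: "\<delta> > 0" and c: "c \<in> {c0..c1}" and R0f: "R0 \<in> Rfam (Rbar c) (k c) (U c)"
      and SX: "S \<in> Xspace" and adm: "admissible \<delta> R0 S"
    have cc: "c0 \<le> c" "c < 1" using c c1 by auto
    have W0: "W2inf R0" by (rule fam_W2[OF cc R0f])
    have WS: "W2inf S" and S0: "S 0 = 0" using SX by (auto simp: Xspace_def)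
    have dR0: "(R0 has_real_derivative deriv R0 x) (at x)" for x
      using W0 by (auto simp: W2inf_def DERIV_deriv_iff_real_differentiable)
    have dS: "(S has_real_derivative deriv S x) (at x)" for x
      using WS by (auto simp: W2inf_def DERIV_deriv_iff_real_differentiable)
    have R00: "R0 0 = 0" by (rule fam_zero[OF cc R0f])
    have sgnR0: "sgn (R0 y) = sgn y" for y
    proof (rule sign_lemma[OF dR0 R00, of "- x0" x0])
      fix x assume "- x0 < x" "x < x0"
      then have "\<bar>x\<bar> < x0" by (simp add: abs_less_iff)
      then show "deriv R0 x > 0" using fam_slope[OF cc R0f, of x] consts_pos by auto
    next
      fix x assume "x > x0" then show "R0 x > 0" using fam_pos[OF cc R0f, of x] consts_pos by auto
    next
      fix x assume "x < - x0" then show "R0 x < 0" using fam_neg[OF cc R0f, of x] consts_pos by auto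
    qed (use consts_pos in auto)
    have c0c: "c0\<^sup>2 \<le> c\<^sup>2" using cc c0 by (intro power_mono) auto
    have c0sq: "c0\<^sup>2 > 0" using c0 by simp
    have R0b: "\<bar>R0 s\<bar> \<le> D" for s
    proof -
      have "c\<^sup>2 \<le> c1\<^sup>2" using c c0 by (intro power_mono) auto
      then have "D0 / (1 - c\<^sup>2) \<le> D"
        unfolding D_def using consts_pos c1sq by (intro divide_left_mono) (auto intro!: mult_pos_pos)
      then show ?thesis using fam_bound[OF cc R0f, of s] by linarith
    qed
    have Fb: "\<bar>Delta1 (\<lambda>s. R0 s - sgn (R0 s)) s\<bar> \<le> 4 * (D + 1)" for s
    proof -
      have h: "\<bar>R0 t - sgn (R0 t)\<bar> \<le> D + 1" for t
      proof -
        have "\<bar>sgn (R0 t)\<bar> \<le> (1::real)" by (simp add: sgn_real_def)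
        then show ?thesis using R0b[of t] by linarith
      qed
      show ?thesis unfolding Delta1_def
        using h[of "s+1"] h[of s] h[of "s - 1"] by (rule tri3)
    qed
    have lip1: "\<bar>deriv R0 y - deriv R0 x\<bar> \<le> K0 * \<bar>y - x\<bar>" if xy: "x \<le> y" for x y
    proof -
      have "c\<^sup>2 * (deriv R0 y - deriv R0 x) = integral {x..y} (Delta1 (\<lambda>s. R0 s - sgn (R0 s)))"
        using fam_ode[OF cc R0f] xy by (simp add: solves_wave_def)
      moreover have "\<bar>integral {x..y} (Delta1 (\<lambda>s. R0 s - sgn (R0 s)))\<bar> \<le> 4 * (D + 1) * (y - x)"
        by (rule const_int_bound[where f="Delta1 (\<lambda>s. R0 s - sgn (R0 s))", OF xy Fb])
      moreover have "\<bar>c\<^sup>2 * (deriv R0 y - deriv R0 x)\<bar> = c\<^sup>2 * \<bar>deriv R0 y - deriv R0 x\<bar>"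
        by (simp add: abs_mult)
      ultimately have "c\<^sup>2 * \<bar>deriv R0 y - deriv R0 x\<bar> \<le> 4 * (D + 1) * (y - x)" by simp
      moreover have "c0\<^sup>2 * \<bar>deriv R0 y - deriv R0 x\<bar> \<le> c\<^sup>2 * \<bar>deriv R0 y - deriv R0 x\<bar>"
        using c0c by (intro mult_right_mono) auto
      ultimately have "c0\<^sup>2 * \<bar>deriv R0 y - deriv R0 x\<bar> \<le> 4 * (D + 1) * (y - x)" by linarith
      then show ?thesis using c0sq xy by (simp add: K0_def field_simps)
    qed
    have lipR0: "\<bar>deriv R0 y - deriv R0 x\<bar> \<le> K0 * \<bar>y - x\<bar>" for x y
    proof (cases "x \<le> y")
      case True then show ?thesis by (rule lip1)
    next
      case False then show ?thesis using lip1[of y x] by (simp add: abs_minus_commute)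
    qed
    define N where "N = d2norm S"
    have N0: "N \<ge> 0" using d2norm_lip(1)[OF WS] by (simp add: N_def)
    have lipS: "\<bar>deriv S y - deriv S x\<bar> \<le> N * \<bar>y - x\<bar>" for x y
      using d2norm_lip(2)[OF WS] by (simp add: N_def)
    define R where "R = (\<lambda>x. R0 x + S x)"
    define R' where "R' = (\<lambda>x. deriv R0 x + deriv S x)"
    have dR: "(R has_real_derivative R' x) (at x)" for x
      unfolding R_def R'_def by (intro DERIV_add dR0 dS)
    have lipR: "\<bar>R' y - R' x\<bar> \<le> (K0 + N) * \<bar>y - x\<bar>" for x y
      using tri2[OF lipR0[of y x] lipS[of y x]] unfolding R'_def distrib_right .
    obtain xm xp where xs: "xm < 0" "0 < xp" "R0 xp + S xp = \<delta>" "R0 xm + S xm = - \<delta>"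
      and lft: "\<forall>x<xm. R0 x + S x < - \<delta>" and rgt: "\<forall>x>xp. R0 x + S x > \<delta>"
      and slp: "\<forall>x. xm < x \<and> x < xp \<longrightarrow>
        deriv R0 0 / 2 < deriv R0 x + deriv S x \<and> deriv R0 x + deriv S x < 2 * deriv R0 0"
      using adm unfolding admissible_def by blast
    have d00: "deriv R0 0 > d0" using fam_slope[OF cc R0f, of 0] consts_pos by simp
    have dPc: "continuous_on UNIV (dPsi \<delta>)"
      using dPsi_deriv[OF dpos] by (meson DERIV_isCont continuous_at_imp_continuous_on)
    have I0: "integral UNIV (\<lambda>r. dPsi \<delta> r - sgn r) = 0" using I_zero[OF dpos] by simp
    have K0N: "K0 + N \<ge> 0" using K00 N0 by simp
    have f1: "\<And>r. (Psi \<delta> has_real_derivative dPsi \<delta> r) (at r)" using Psi_C2[OF dpos] .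
    have f2: "\<And>r. \<bar>r\<bar> \<ge> \<delta> \<Longrightarrow> dPsi \<delta> r = sgn r" using dPsi_outside[OF dpos] .
    have f3: "\<And>r. \<bar>dPsi \<delta> r\<bar> \<le> C_Psi" using dPsi_bound[OF dpos] .
    note co = core[where Psi="Psi \<delta>" and dPsi="dPsi \<delta>" and R=R and R'=R' and \<delta>=\<delta> and C=C_Psi
        and K="K0 + N" and xm=xm and xp=xp,
        OF f1 dPc f2 f3 I0 dpos consts_pos(3) K0N dR lipR]
    have hyps: "R 0 = 0" "R xp = \<delta>" "R xm = - \<delta>" "\<And>x. x < xm \<Longrightarrow> R x < - \<delta>"
      "\<And>x. x > xp \<Longrightarrow> R x > \<delta>" "\<And>x. xm < x \<Longrightarrow> x < xp \<Longrightarrow> R' x > d0 / 2"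
      using xs lft rgt slp d00 R00 S0 unfolding R_def R'_def by force+
    have Geq: "(\<lambda>x. dPsi \<delta> (R0 x + S x) - sgn (R0 x)) = (\<lambda>y. dPsi \<delta> (R y) - sgn y)"
      by (simp add: R_def sgnR0)
    have b1: "\<bar>Aop (\<lambda>y. dPsi \<delta> (R y) - sgn y) x\<bar> \<le> (C_Psi + 1) * (4 * \<delta> / d0)" for x
      by (rule co(1)) (fact hyps xs | blast)+
    have b2: "\<bar>Aop (Aop (\<lambda>y. dPsi \<delta> (R y) - sgn y)) x\<bar>
           \<le> (16 * \<delta>\<^sup>2 / d0\<^sup>2) * (2 * (C_Psi + 1) * (K0 + N) / d0 + 4 * (C_Psi + 1))" for x
      by (rule co(2)) (fact hyps xs | blast)+
    have C20: "C2 \<ge> 0" using M0 K00 consts_pos by (simp add: C2_def)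
    have e1: "(C_Psi + 1) * (4 * \<delta> / d0) \<le> (M * 4 / d0 + C2) * \<delta>"
    proof -
      have "(C_Psi + 1) * (4 * \<delta> / d0) = (M * 4 / d0) * \<delta>" by (simp add: M_def)
      also have "\<dots> \<le> (M * 4 / d0 + C2) * \<delta>" using C20 dpos by (intro mult_right_mono) auto
      finally show ?thesis .
    qed
    have e2: "(16 * \<delta>\<^sup>2 / d0\<^sup>2) * (2 * (C_Psi + 1) * (K0 + N) / d0 + 4 * (C_Psi + 1))
        \<le> (M * 4 / d0 + C2) * (1 + N) * \<delta>\<^sup>2"
    proof -
      have q: "2 * M * (K0 + N) / d0 + 4 * M \<le> (2 * M * K0 / d0 + 4 * M + 2 * M / d0) * (1 + N)"
      proof -
        have "(2 * M * K0 / d0 + 4 * M + 2 * M / d0) * (1 + N)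
          = (2 * M * (K0 + N) / d0 + 4 * M) + (2 * M / d0 + (2 * M * K0 / d0 + 4 * M) * N)"
          using consts_pos(3) by (simp add: field_simps add_divide_distrib[symmetric])
        moreover have "0 \<le> 2 * M / d0 + (2 * M * K0 / d0 + 4 * M) * N"
          using M0 K00 N0 consts_pos by simp
        ultimately show ?thesis by linarith
      qed
      have "(16 * \<delta>\<^sup>2 / d0\<^sup>2) * (2 * (C_Psi + 1) * (K0 + N) / d0 + 4 * (C_Psi + 1))
          = (16 * \<delta>\<^sup>2 / d0\<^sup>2) * (2 * M * (K0 + N) / d0 + 4 * M)" by (simp add: M_def)
      also have "\<dots> \<le> (16 * \<delta>\<^sup>2 / d0\<^sup>2) * ((2 * M * K0 / d0 + 4 * M + 2 * M / d0) * (1 + N))"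
        using q by (intro mult_left_mono) auto
      also have "\<dots> = C2 * (1 + N) * \<delta>\<^sup>2" by (simp add: C2_def)
      also have "\<dots> \<le> (M * 4 / d0 + C2) * (1 + N) * \<delta>\<^sup>2"
        using M0 consts_pos N0 by (intro mult_right_mono) auto
      finally show ?thesis .
    qed
    show "let G = (\<lambda>x. dPsi \<delta> (R0 x + S x) - sgn (R0 x)) in
                supnorm (Aop G) \<le> (M * 4 / d0 + C2) * \<delta> \<and>
                supnorm (Aop (Aop G)) \<le> (M * 4 / d0 + C2) * (1 + d2norm S) * \<delta>\<^sup>2"
      unfolding Let_def Geq N_def[symmetric]
      using supnorm_le[of _ "(M * 4 / d0 + C2) * \<delta>"] supnorm_le[of _ "(M * 4 / d0 + C2) * (1 + N) * \<delta>\<^sup>2"]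
        b1 b2 e1 e2 order_trans by meson
  qed
qed

end
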